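(* Let $G$ be a compact group and $z:G\to\mathbb C\setminus\{0\}$ a continuous central function. Then the Ewens measure $\mu^{\mathrm{Ewens}}_{S_n(G)}$ is a probability measure on $S_n(G)$, i.e. $$\int_{S_n(G)} n!\,\frac{\prod_{c\in[G]}z(c)^{[x](c)}\overline{z(c)}^{[x](c)}}{I(I+1)\cdots(I+n-1)}\,d\mu_{S_n(G)}(x)=1,\qquad I=\int_G|z(g)|^2d\mu_G(g).$$
   Context: $G$ compact with normalized Haar measure $\mu_G$; $[G]$ its conjugacy classes; central functions are regarded as functions on $[G]$. $S_n(G)=G^n\rtimes S_n$ with elements $((g_1,\dots,g_n),s)$ and product $((g_i),s)((h_i),t)=((g_ih_{s^{-1}(i)}),st)$. For $x=((g_1,\dots,g_n),s)$, the color of a cycle $(i_1\cdots i_r)$ of $s$ is the conjugacy class of $g_{i_r}\cdots g_{i_1}$, and $[x](c)$ is the number of cycles of $s$ of color $c$. $\mu_{S_n(G)}$ is the product of Haar measure on $G^n$ and the uniform probability measure on $S_n$. The Ewens measure $\mu^{\mathrm{Ewens}}_{S_n(G)}$ is the measure with the displayed density with respect to $\mu_{S_n(G)}$. *)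

theory Defs
  imports "HOL-Probability.Probability" "HOL-Algebra.Group" "HOL-Combinatorics.Orbits"
begin

definition borel_of_top :: "'a topology \<Rightarrow> 'a measure" where
  "borel_of_top T = sigma (topspace T) {U. openin T U}"

definition compact_group :: "('a, 'b) monoid_scheme \<Rightarrow> 'a topology \<Rightarrow> bool" where
  "compact_group G T \<longleftrightarrow> group G \<and> topspace T = carrier G \<and>
     compact_space T \<and> Hausdorff_space T \<and>
     continuous_map (prod_topology T T) T (\<lambda>(x, y). x \<otimes>\<^bsub>G\<^esub> y) \<and>
     continuous_map T T (\<lambda>x. inv\<^bsub>G\<^esub> x)"

definition normalized_haar :: "('a, 'b) monoid_scheme \<Rightarrow> 'a topology \<Rightarrow> 'a measure \<Rightarrow> bool" where
  "normalized_haar G T \<mu> \<longleftrightarrow>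
     prob_space \<mu> \<and> space \<mu> = carrier G \<and> sets \<mu> = sets (borel_of_top T) \<and>
     (\<forall>h\<in>carrier G. \<forall>A\<in>sets \<mu>. measure \<mu> ((\<lambda>x. h \<otimes>\<^bsub>G\<^esub> x) ` A) = measure \<mu> A) \<and>
     (\<forall>h\<in>carrier G. \<forall>A\<in>sets \<mu>. measure \<mu> ((\<lambda>x. x \<otimes>\<^bsub>G\<^esub> h) ` A) = measure \<mu> A) \<and>
     (\<forall>A\<in>sets \<mu>. measure \<mu> A = (INF U\<in>{U. openin T U \<and> A \<subseteq> U}. measure \<mu> U)) \<and>
     (\<forall>U. openin T U \<longrightarrow> measure \<mu> U = (SUP K\<in>{K. compactin T K \<and> K \<subseteq> U}. measure \<mu> K))"

definition conj_class :: "('a, 'b) monoid_scheme \<Rightarrow> 'a \<Rightarrow> 'a set" where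
  "conj_class G g = {h \<otimes>\<^bsub>G\<^esub> g \<otimes>\<^bsub>G\<^esub> inv\<^bsub>G\<^esub> h | h. h \<in> carrier G}"

definition conj_classes :: "('a, 'b) monoid_scheme \<Rightarrow> 'a set set" where
  "conj_classes G = conj_class G ` carrier G"

definition central_fun :: "('a, 'b) monoid_scheme \<Rightarrow> ('a \<Rightarrow> 'c) \<Rightarrow> bool" where
  "central_fun G z \<longleftrightarrow> (\<forall>g\<in>carrier G. \<forall>h\<in>carrier G. z (h \<otimes>\<^bsub>G\<^esub> g \<otimes>\<^bsub>G\<^esub> inv\<^bsub>G\<^esub> h) = z g)"

text \<open>A central function regarded as a function on conjugacy classes.\<close>
definition class_val :: "('a \<Rightarrow> 'c) \<Rightarrow> 'a set \<Rightarrow> 'c" where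
  "class_val z c = z (SOME g. g \<in> c)"

text \<open>Elements are pairs (g, s) with g : {..<n} \<rightarrow> carrier G (the tuple (g_0,...,g_{n-1}))
  and s a permutation of {..<n}.\<close>

fun cyc_prod :: "('a, 'b) monoid_scheme \<Rightarrow> (nat \<Rightarrow> 'a) \<Rightarrow> (nat \<Rightarrow> nat) \<Rightarrow> nat \<Rightarrow> nat \<Rightarrow> 'a" where
  "cyc_prod G g s i 0 = \<one>\<^bsub>G\<^esub>"
| "cyc_prod G g s i (Suc k) = g ((s ^^ k) i) \<otimes>\<^bsub>G\<^esub> cyc_prod G g s i k"

definition perm_cycles :: "nat \<Rightarrow> (nat \<Rightarrow> nat) \<Rightarrow> nat set set" where
  "perm_cycles n s = (\<lambda>i. orbit s i) ` {..<n}"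

text \<open>The color of the cycle C = (i_1 ... i_r) (with s(i_k) = i_{k+1}) is the conjugacy class
  of g_{i_r} \<otimes> ... \<otimes> g_{i_1}; this does not depend on the chosen starting point i_1.\<close>
definition cycle_color :: "('a, 'b) monoid_scheme \<Rightarrow> (nat \<Rightarrow> 'a) \<Rightarrow> (nat \<Rightarrow> nat) \<Rightarrow> nat set \<Rightarrow> 'a set" where
  "cycle_color G g s C = conj_class G (cyc_prod G g s (SOME i. i \<in> C) (card C))"

definition cycle_count :: "('a, 'b) monoid_scheme \<Rightarrow> nat \<Rightarrow> (nat \<Rightarrow> 'a) \<times> (nat \<Rightarrow> nat) \<Rightarrow> 'a set \<Rightarrow> nat" where
  "cycle_count G n x c = card {C \<in> perm_cycles n (snd x). cycle_color G (fst x) (snd x) C = c}"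

definition wreath_measure :: "nat \<Rightarrow> 'a measure \<Rightarrow> ((nat \<Rightarrow> 'a) \<times> (nat \<Rightarrow> nat)) measure" where
  "wreath_measure n \<mu> = (PiM {..<n} (\<lambda>_. \<mu>)) \<Otimes>\<^sub>M uniform_count_measure {s. s permutes {..<n}}"

text \<open>The Ewens density (w.r.t. \<mu>_{S_n(G)}); the product over [G] has only finitely many factors
  different from 1, namely those classes c with [x](c) \<noteq> 0.\<close>
definition ewens_density :: "('a, 'b) monoid_scheme \<Rightarrow> 'a measure \<Rightarrow> ('a \<Rightarrow> complex) \<Rightarrow> nat
    \<Rightarrow> (nat \<Rightarrow> 'a) \<times> (nat \<Rightarrow> nat) \<Rightarrow> complex" where
  "ewens_density G \<mu> z n x =
     (let I = (\<integral>g. (cmod (z g))\<^sup>2 \<partial>\<mu>) in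
      of_nat (fact n) *
      (\<Prod>c\<in>{c \<in> conj_classes G. cycle_count G n x c \<noteq> 0}.
          class_val z c ^ cycle_count G n x c * cnj (class_val z c) ^ cycle_count G n x c)
      / complex_of_real (pochhammer I n))"

end

theory Submission
  imports Defs
begin
lemma meas_cont_compact:
  fixes X :: "'x topology" and M :: "'x measure" and f :: "'x \<Rightarrow> real"
  assumes cs: "compact_space X" and sp: "space M = topspace X"
    and basis: "\<And>U x. openin X U \<Longrightarrow> x \<in> U \<Longrightarrow> \<exists>B \<in> sets M. openin X B \<and> x \<in> B \<and> B \<subseteq> U"
    and fc: "continuous_map X euclideanreal f"
  shows "f \<in> borel_measurable M"
proof (subst borel_measurable_iff_greater, intro allI)
  fix a :: real
  define S where "S = {x \<in> topspace X. a < f x}"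
  have So: "openin X S" unfolding S_def
    using openin_continuous_map_preimage[OF fc, of "{a<..}"] by auto
  have "\<exists>V. V \<in> sets M \<and> {x \<in> topspace X. a + 1 / Suc m \<le> f x} \<subseteq> V \<and> V \<subseteq> S" for m :: nat
  proof -
    define K where "K = {x \<in> topspace X. a + 1 / Suc m \<le> f x}"
    have "closedin X K" unfolding K_def
      using closedin_continuous_map_preimage[OF fc, of "{a + 1 / Suc m..}"] by auto
    hence Kc: "compactin X K" using cs closedin_compact_space by blast
    define U where "U = {B \<in> sets M. openin X B \<and> B \<subseteq> S}"
    have KS: "K \<subseteq> S"
    proof
      fix x assume "x \<in> K"
      hence h: "x \<in> topspace X" "a + 1 / Suc m \<le> f x" unfolding K_def by auto
      have "(0::real) < 1 / Suc m" by simp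
      hence "a < f x" using h(2) by linarith
      thus "x \<in> S" unfolding S_def using h(1) by auto
    qed
    have "K \<subseteq> \<Union>U"
    proof
      fix x assume "x \<in> K"
      with KS have "x \<in> S" by auto
      then obtain B where "B \<in> sets M" "openin X B" "x \<in> B" "B \<subseteq> S" using basis[OF So] by blast
      thus "x \<in> \<Union>U" unfolding U_def by auto
    qed
    moreover have "\<forall>B\<in>U. openin X B" unfolding U_def by auto
    ultimately obtain F where F: "finite F" "F \<subseteq> U" "K \<subseteq> \<Union>F"
      using Kc unfolding compactin_def by (metis (no_types, lifting))
    have "\<Union>F \<in> sets M" using F U_def by (intro sets.finite_Union) auto
    moreover have "\<Union>F \<subseteq> S" using F U_def by auto
    ultimately show ?thesis using F K_def by blast
  qed
  then obtain V where V: "\<And>m. V m \<in> sets M" "\<And>m. {x \<in> topspace X. a + 1 / Suc m \<le> f x} \<subseteq> V m"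
    "\<And>m. V m \<subseteq> S" by metis
  have "S = (\<Union>m. V m)"
  proof
    show "S \<subseteq> (\<Union>m. V m)"
    proof
      fix x assume "x \<in> S"
      hence x: "x \<in> topspace X" "a < f x" unfolding S_def by auto
      then obtain m :: nat where "1 / Suc m < f x - a"
        using reals_Archimedean[of "f x - a"] by (auto simp: inverse_eq_divide)
      hence "x \<in> V m" using V(2)[of m] x by auto
      thus "x \<in> (\<Union>m. V m)" by auto
    qed
  qed (use V in blast)
  moreover have "(\<Union>m. V m) \<in> sets M" using V by auto
  ultimately show "{x \<in> space M. a < f x} \<in> sets M" using sp S_def by simp
qed

locale ew = group G for G :: "('a, 'b) monoid_scheme" (structure) +
  fixes T :: "'a topology" and \<mu> :: "'a measure" and z :: "'a \<Rightarrow> complex"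
  assumes cg: "compact_group G T" and nh: "normalized_haar G T \<mu>"
    and zc: "continuous_map T euclidean z" and znz: "\<forall>g\<in>carrier G. z g \<noteq> 0"
    and zcen: "central_fun G z"
begin

lemma top: "topspace T = carrier G" using cg unfolding compact_group_def by auto
lemma cspace: "compact_space T" using cg unfolding compact_group_def by auto
lemma mult_cont: "continuous_map (prod_topology T T) T (\<lambda>(x, y). x \<otimes> y)"
  using cg unfolding compact_group_def by auto
lemma prob: "prob_space \<mu>" using nh unfolding normalized_haar_def by auto
lemma space_mu: "space \<mu> = carrier G" using nh unfolding normalized_haar_def by auto
lemma sets_mu: "sets \<mu> = sets (borel_of_top T)" using nh unfolding normalized_haar_def by auto
lemma rinv: "h \<in> carrier G \<Longrightarrow> A \<in> sets \<mu> \<Longrightarrow> measure \<mu> ((\<lambda>x. x \<otimes> h) ` A) = measure \<mu> A"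
  using nh unfolding normalized_haar_def by auto
lemma linv: "h \<in> carrier G \<Longrightarrow> A \<in> sets \<mu> \<Longrightarrow> measure \<mu> ((\<lambda>x. h \<otimes> x) ` A) = measure \<mu> A"
  using nh unfolding normalized_haar_def by auto

lemma open_sets: "openin T U \<Longrightarrow> U \<in> sets \<mu>"
proof -
  assume "openin T U"
  moreover have "{U. openin T U} \<subseteq> Pow (topspace T)" using openin_subset by auto
  ultimately show ?thesis unfolding sets_mu borel_of_top_def
    by (simp add: sets_measure_of sigma_sets.Basic)
qed

lemma cont_mult:
  assumes "continuous_map X T f" "continuous_map X T g"
  shows "continuous_map X T (\<lambda>x. f x \<otimes> g x)"
proof -
  have "continuous_map X (prod_topology T T) (\<lambda>x. (f x, g x))"
    by (rule continuous_map_pairedI) (use assms in auto)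
  from continuous_map_compose[OF this mult_cont] show ?thesis by (simp add: o_def)
qed

lemma measurable_into_mu:
  assumes "f \<in> space M \<rightarrow> carrier G" "\<And>U. openin T U \<Longrightarrow> f -` U \<inter> space M \<in> sets M"
  shows "f \<in> measurable M \<mu>"
proof -
  have "f \<in> measurable M (borel_of_top T)" unfolding borel_of_top_def
    apply (rule measurable_measure_of)
    subgoal using openin_subset by blast
    subgoal using assms top by auto
    subgoal using assms by auto
    done
  thus ?thesis unfolding measurable_cong_sets[OF refl sets_mu] .
qed

lemma cont_measurable_mu:
  assumes "continuous_map T T f"
  shows "f \<in> measurable \<mu> \<mu>"
proof (rule measurable_into_mu)
  show "f \<in> space \<mu> \<rightarrow> carrier G" using assms space_mu top
    by (metis continuous_map_funspace)
  fix U assume "openin T U"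
  hence "openin T {x \<in> topspace T. f x \<in> U}" using openin_continuous_map_preimage assms by blast
  moreover have "{x \<in> topspace T. f x \<in> U} = f -` U \<inter> space \<mu>" using space_mu top by auto
  ultimately show "f -` U \<inter> space \<mu> \<in> sets \<mu>" using open_sets by auto
qed

lemma cont_borel_mu:
  fixes f :: "'a \<Rightarrow> real"
  assumes "continuous_map T euclideanreal f"
  shows "f \<in> borel_measurable \<mu>"
  by (rule meas_cont_compact[OF cspace]) (use assms space_mu top open_sets in auto)

lemma rtrans_meas: "h \<in> carrier G \<Longrightarrow> (\<lambda>x. x \<otimes> h) \<in> measurable \<mu> \<mu>"
  by (rule cont_measurable_mu, rule cont_mult) (auto simp: top)

lemma ltrans_meas: "h \<in> carrier G \<Longrightarrow> (\<lambda>x. h \<otimes> x) \<in> measurable \<mu> \<mu>"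
  by (rule cont_measurable_mu, rule cont_mult) (auto simp: top)

lemma distr_right:
  assumes h: "h \<in> carrier G"
  shows "distr \<mu> \<mu> (\<lambda>x. x \<otimes> h) = \<mu>"
proof (rule measure_eqI)
  interpret prob_space \<mu> by (rule prob)
  show "sets (distr \<mu> \<mu> (\<lambda>x. x \<otimes> h)) = sets \<mu>" by simp
  fix A assume A: "A \<in> sets (distr \<mu> \<mu> (\<lambda>x. x \<otimes> h))"
  hence A': "A \<in> sets \<mu>" by simp
  hence Ac: "A \<subseteq> carrier G" using sets.sets_into_space space_mu by blast
  have pre: "(\<lambda>x. x \<otimes> h) -` A \<inter> space \<mu> = (\<lambda>x. x \<otimes> inv h) ` A"
  proof (intro equalityI subsetI)
    fix x assume "x \<in> (\<lambda>x. x \<otimes> h) -` A \<inter> space \<mu>"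
    hence x: "x \<in> carrier G" "x \<otimes> h \<in> A" using space_mu by auto
    hence "x = (x \<otimes> h) \<otimes> inv h" using h by (simp add: m_assoc)
    thus "x \<in> (\<lambda>x. x \<otimes> inv h) ` A" using x by blast
  next
    fix x assume "x \<in> (\<lambda>x. x \<otimes> inv h) ` A"
    then obtain y where y: "y \<in> A" "x = y \<otimes> inv h" by auto
    hence "y \<in> carrier G" using Ac by auto
    hence "x \<otimes> h = y" "x \<in> carrier G" using y h by (simp_all add: m_assoc)
    thus "x \<in> (\<lambda>x. x \<otimes> h) -` A \<inter> space \<mu>" using y space_mu by auto
  qed
  have "emeasure (distr \<mu> \<mu> (\<lambda>x. x \<otimes> h)) A = emeasure \<mu> ((\<lambda>x. x \<otimes> h) -` A \<inter> space \<mu>)"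
    by (rule emeasure_distr[OF rtrans_meas[OF h] A'])
  also have "\<dots> = emeasure \<mu> ((\<lambda>x. x \<otimes> inv h) ` A)" by (simp add: pre)
  also have "\<dots> = ennreal (measure \<mu> ((\<lambda>x. x \<otimes> inv h) ` A))"
    by (simp add: emeasure_eq_measure)
  also have "\<dots> = ennreal (measure \<mu> A)" using rinv[of "inv h" A] h A' by simp
  also have "\<dots> = emeasure \<mu> A" by (simp add: emeasure_eq_measure)
  finally show "emeasure (distr \<mu> \<mu> (\<lambda>x. x \<otimes> h)) A = emeasure \<mu> A" .
qed

lemma distr_left:
  assumes h: "h \<in> carrier G"
  shows "distr \<mu> \<mu> (\<lambda>x. h \<otimes> x) = \<mu>"
proof (rule measure_eqI)
  interpret prob_space \<mu> by (rule prob)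
  show "sets (distr \<mu> \<mu> (\<lambda>x. h \<otimes> x)) = sets \<mu>" by simp
  fix A assume A: "A \<in> sets (distr \<mu> \<mu> (\<lambda>x. h \<otimes> x))"
  hence A': "A \<in> sets \<mu>" by simp
  hence Ac: "A \<subseteq> carrier G" using sets.sets_into_space space_mu by blast
  have pre: "(\<lambda>x. h \<otimes> x) -` A \<inter> space \<mu> = (\<lambda>x. inv h \<otimes> x) ` A"
  proof (intro equalityI subsetI)
    fix x assume "x \<in> (\<lambda>x. h \<otimes> x) -` A \<inter> space \<mu>"
    hence x: "x \<in> carrier G" "h \<otimes> x \<in> A" using space_mu by auto
    hence "x = inv h \<otimes> (h \<otimes> x)" using h by (simp add: m_assoc[symmetric])
    thus "x \<in> (\<lambda>x. inv h \<otimes> x) ` A" using x by blast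
  next
    fix x assume "x \<in> (\<lambda>x. inv h \<otimes> x) ` A"
    then obtain y where y: "y \<in> A" "x = inv h \<otimes> y" by auto
    hence "y \<in> carrier G" using Ac by auto
    hence "h \<otimes> x = y" "x \<in> carrier G" using y h by (simp_all add: m_assoc[symmetric])
    thus "x \<in> (\<lambda>x. h \<otimes> x) -` A \<inter> space \<mu>" using y space_mu by auto
  qed
  have "emeasure (distr \<mu> \<mu> (\<lambda>x. h \<otimes> x)) A = emeasure \<mu> ((\<lambda>x. h \<otimes> x) -` A \<inter> space \<mu>)"
    by (rule emeasure_distr[OF ltrans_meas[OF h] A'])
  also have "\<dots> = emeasure \<mu> ((\<lambda>x. inv h \<otimes> x) ` A)" by (simp add: pre)
  also have "\<dots> = ennreal (measure \<mu> ((\<lambda>x. inv h \<otimes> x) ` A))"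
    by (simp add: emeasure_eq_measure)
  also have "\<dots> = ennreal (measure \<mu> A)" using linv[of "inv h" A] h A' by simp
  also have "\<dots> = emeasure \<mu> A" by (simp add: emeasure_eq_measure)
  finally show "emeasure (distr \<mu> \<mu> (\<lambda>x. h \<otimes> x)) A = emeasure \<mu> A" .
qed

lemma int_right:
  fixes f :: "'a \<Rightarrow> real"
  assumes h: "h \<in> carrier G" and f: "f \<in> borel_measurable \<mu>"
  shows "(\<integral>x. f (x \<otimes> h) \<partial>\<mu>) = integral\<^sup>L \<mu> f"
proof -
  have "integral\<^sup>L \<mu> f = integral\<^sup>L (distr \<mu> \<mu> (\<lambda>x. x \<otimes> h)) f" by (simp add: distr_right h)
  also have "\<dots> = (\<integral>x. f (x \<otimes> h) \<partial>\<mu>)" by (rule integral_distr[OF rtrans_meas[OF h] f])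
  finally show ?thesis by simp
qed

lemma int_left:
  fixes f :: "'a \<Rightarrow> real"
  assumes h: "h \<in> carrier G" and f: "f \<in> borel_measurable \<mu>"
  shows "(\<integral>x. f (h \<otimes> x) \<partial>\<mu>) = integral\<^sup>L \<mu> f"
proof -
  have "integral\<^sup>L \<mu> f = integral\<^sup>L (distr \<mu> \<mu> (\<lambda>x. h \<otimes> x)) f" by (simp add: distr_left h)
  also have "\<dots> = (\<integral>x. f (h \<otimes> x) \<partial>\<mu>)" by (rule integral_distr[OF ltrans_meas[OF h] f])
  finally show ?thesis by simp
qed

definition phi :: "'a \<Rightarrow> real" where "phi x = (cmod (z x))^2"

lemma phi_cont: "continuous_map T euclideanreal phi"
  unfolding phi_def by (intro continuous_intros zc)

lemma phi_borel: "phi \<in> borel_measurable \<mu>" by (rule cont_borel_mu[OF phi_cont])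

lemma phi_nonneg: "0 \<le> phi x" by (simp add: phi_def)

lemma phi_bounds: "\<exists>B d. 0 < d \<and> (\<forall>x\<in>carrier G. d \<le> phi x \<and> phi x \<le> B)"
proof -
  have "compactin euclideanreal (phi ` topspace T)"
    using image_compactin[OF cspace[unfolded compact_space_def] phi_cont] .
  hence K: "compact (phi ` carrier G)" using top by simp
  have ne: "phi ` carrier G \<noteq> {}" by auto
  obtain a where a: "a \<in> phi ` carrier G" "\<forall>y\<in>phi ` carrier G. a \<le> y"
    using compact_attains_inf[OF K ne] by blast
  obtain b where b: "b \<in> phi ` carrier G" "\<forall>y\<in>phi ` carrier G. y \<le> b"
    using compact_attains_sup[OF K ne] by blast
  from a obtain x0 where x0: "x0 \<in> carrier G" "a = phi x0" by auto
  have "0 < a" using x0 znz by (simp add: phi_def)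
  thus ?thesis using a b by blast
qed

definition II :: real where "II = (\<integral>g. phi g \<partial>\<mu>)"

lemma phi_integrable: "integrable \<mu> phi"
proof -
  interpret prob_space \<mu> by (rule prob)
  obtain B d where Bd: "0 < d" "\<forall>x\<in>carrier G. d \<le> phi x \<and> phi x \<le> B" using phi_bounds by blast
  show ?thesis
    by (rule integrable_const_bound[where B=B]) (use Bd space_mu phi_borel phi_nonneg in auto)
qed

lemma II_pos: "0 < II"
proof -
  interpret prob_space \<mu> by (rule prob)
  obtain B d where Bd: "0 < d" "\<forall>x\<in>carrier G. d \<le> phi x \<and> phi x \<le> B" using phi_bounds by blast
  have "d = (\<integral>g. d \<partial>\<mu>)" by (simp add: prob_space)
  also have "\<dots> \<le> II" unfolding II_def
    by (rule integral_mono) (use phi_integrable Bd space_mu in auto)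
  finally show ?thesis using Bd by simp
qed

end

lemma cont_bounded:
  fixes F :: "'x \<Rightarrow> real"
  assumes "compact_space X" "continuous_map X euclideanreal F"
  shows "\<exists>B. \<forall>x\<in>topspace X. \<bar>F x\<bar> \<le> B"
proof -
  have "compactin euclideanreal (F ` topspace X)"
    using image_compactin[OF assms(1)[unfolded compact_space_def] assms(2)] .
  hence "bounded (F ` topspace X)" by (simp add: compact_imp_bounded)
  then obtain a where "\<forall>y\<in>F ` topspace X. norm y \<le> a" unfolding bounded_iff by blast
  thus ?thesis by auto
qed

lemma perm_of: "s permutes {..<(n::nat)} \<Longrightarrow> permutation s"
  unfolding permutation_permutes using finite_lessThan by blast

lemma orbit_sub: "s permutes {..<(n::nat)} \<Longrightarrow> i < n \<Longrightarrow> orbit s i \<subseteq> {..<n}"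
  by (rule permutes_orbit_subset) simp_all

lemma orbit_self: "permutation s \<Longrightarrow> i \<in> orbit s i"
  by (rule permutation_self_in_orbit)

lemma orbit_eq: "permutation s \<Longrightarrow> j \<in> orbit s i \<Longrightarrow> orbit s j = orbit s i"
  by (rule orbit_cyclic_eq3[OF cyclic_on_orbit'])

lemma funpow_orbit: "permutation s \<Longrightarrow> (s ^^ k) i \<in> orbit s i"
proof -
  assume "permutation s"
  hence "i \<in> orbit s i" by (rule permutation_self_in_orbit)
  thus ?thesis using funpow_in_orbit[of i s i k] by simp
qed

context ew begin

abbreviation PP :: "nat set \<Rightarrow> (nat \<Rightarrow> 'a) measure" where "PP I \<equiv> PiM I (\<lambda>_. \<mu>)"
abbreviation PT :: "nat set \<Rightarrow> (nat \<Rightarrow> 'a) topology" where "PT I \<equiv> product_topology (\<lambda>_::nat. T) I"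

lemma PS: "product_sigma_finite (\<lambda>_::nat. \<mu>)"
  unfolding product_sigma_finite_def using prob_space_imp_sigma_finite[OF prob] by simp

lemma prob_PP: "prob_space (PP I)"
  by (rule prob_space_PiM) (rule prob)

lemma space_PP: "space (PP I) = topspace (PT I)"
  by (simp add: space_PiM space_mu top)

lemma compact_PT: "compact_space (PT I)"
  unfolding compact_space_product_topology using cspace by blast

lemma PP_cont_meas:
  assumes fin: "finite I" and F: "continuous_map (PT I) euclideanreal F"
  shows "F \<in> borel_measurable (PP I)"
proof (rule meas_cont_compact[OF compact_PT space_PP])
  fix U x assume U: "openin (PT I) U" "x \<in> U"
  have "\<exists>V. finite {i \<in> I. V i \<noteq> topspace T} \<and> (\<forall>i\<in>I. openin T (V i)) \<and> x \<in> PiE I V \<and> PiE I V \<subseteq> U"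
    using U(1)[unfolded openin_product_topology_alt] U(2) by (rule bspec)
  then obtain V where V: "\<forall>i\<in>I. openin T (V i)" "x \<in> PiE I V" "PiE I V \<subseteq> U"
    by (elim exE conjE) 
  have "\<forall>i\<in>I. V i \<in> sets \<mu>" using V(1) open_sets by blast
  hence "PiE I V \<in> sets (PP I)" by (intro sets_PiM_I_finite fin) blast
  moreover have "openin (PT I) (PiE I V)" by (subst openin_PiE[OF fin]) (use V(1) in blast)
  ultimately show "\<exists>B\<in>sets (PP I). openin (PT I) B \<and> x \<in> B \<and> B \<subseteq> U" 
    using V(2,3) by (intro bexI[of _ "PiE I V"] conjI)
qed (rule F)

lemma PP_cont_int:
  assumes fin: "finite I" and F: "continuous_map (PT I) euclideanreal F"
  shows "integrable (PP I) F"
proof -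
  interpret prob_space "PP I" by (rule prob_PP)
  obtain B where B: "\<forall>x\<in>topspace (PT I). \<bar>F x\<bar> \<le> B" using cont_bounded[OF compact_PT F] by blast
  show ?thesis
    by (rule integrable_const_bound[where B=B]) (use B space_PP PP_cont_meas[OF fin F] in auto)
qed

lemma PP_insert:
  assumes fin: "finite I" and j: "j \<notin> I" and F: "continuous_map (PT (insert j I)) euclideanreal F"
  shows "integral\<^sup>L (PP (insert j I)) F = (\<integral>x. (\<integral>y. F (x(j := y)) \<partial>\<mu>) \<partial>PP I)"
proof -
  interpret product_sigma_finite "\<lambda>_::nat. \<mu>" by (rule PS)
  show ?thesis
    by (rule product_integral_insert[OF fin j PP_cont_int]) (use fin F in auto)
qed

lemma inner_meas:
  assumes x: "x \<in> space (PP I)" and j: "j \<notin> I" and F: "F \<in> borel_measurable (PP (insert j I))"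
  shows "(\<lambda>y. F (x(j := y))) \<in> borel_measurable \<mu>"
  using measurable_comp[OF measurable_component_update[OF x j] F] by (simp add: o_def)

lemma cyc_cont:
  assumes "\<And>k. k < m \<Longrightarrow> continuous_map X T (\<lambda>x. h x ((s ^^ k) i))"
  shows "continuous_map X T (\<lambda>x. cyc_prod G (h x) s i m)"
  using assms
proof (induction m)
  case 0
  then show ?case by (simp add: top)
next
  case (Suc m)
  show ?case by (simp, rule cont_mult) (use Suc in auto)
qed

definition W :: "nat \<Rightarrow> (nat \<Rightarrow> nat) \<Rightarrow> (nat \<Rightarrow> 'a) \<Rightarrow> real" where
  "W n s g = (\<Prod>C\<in>perm_cycles n s. phi (cyc_prod G g s (SOME i. i \<in> C) (card C)))"

lemma W_cont:
  assumes s: "s permutes {..<n}" and h: "\<And>j. j < n \<Longrightarrow> continuous_map X T (\<lambda>x. h x j)"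
  shows "continuous_map X euclideanreal (\<lambda>x. W n s (h x))"
  unfolding W_def
proof (rule continuous_map_prod)
  show "finite (perm_cycles n s)" unfolding perm_cycles_def by simp
  fix C assume "C \<in> perm_cycles n s"
  then obtain i0 where i0: "i0 < n" "C = orbit s i0" unfolding perm_cycles_def by auto
  define a where "a = (SOME i. i \<in> C)"
  have "i0 \<in> C" using i0 orbit_self[OF perm_of[OF s]] by auto
  hence "a \<in> C" unfolding a_def by (rule someI)
  hence "a < n" using orbit_sub[OF s i0(1)] i0 by auto
  have ak: "(s ^^ k) a < n" for k
  proof -
    have "(s ^^ k) a \<in> orbit s a" by (rule funpow_orbit[OF perm_of[OF s]])
    thus ?thesis using orbit_sub[OF s \<open>a < n\<close>] by auto
  qed
  have "continuous_map X T (\<lambda>x. cyc_prod G (h x) s a (card C))"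
    by (rule cyc_cont) (rule h[OF ak])
  from continuous_map_compose[OF this phi_cont]
  show "continuous_map X euclideanreal (\<lambda>x. phi (cyc_prod G (h x) s (SOME i. i \<in> C) (card C)))"
    unfolding a_def o_def .
qed

end

lemma orbit_card: "permutation s \<Longrightarrow> card (orbit s x) = funpow_dist1 s x x"
proof -
  assume ps: "permutation s"
  have xo: "x \<in> orbit s x" by (rule permutation_self_in_orbit[OF ps])
  have "orbit s x = (\<lambda>n. (s ^^ n) x) ` {0..<funpow_dist1 s x x}" by (rule orbit_conv_funpow_dist1[OF xo])
  moreover have "inj_on (\<lambda>n. (s ^^ n) x) {0..<funpow_dist1 s x x}" by (rule inj_on_funpow_dist1[OF xo])
  ultimately show ?thesis by (simp add: card_image)
qed

lemma orbit_funpow_card: "permutation s \<Longrightarrow> (s ^^ card (orbit s x)) x = x"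
  using orbit_card funpow_dist1_prop permutation_self_in_orbit by metis

lemma orbit_card_pos: "permutation s \<Longrightarrow> 0 < card (orbit s x)"
  by (subst orbit_card) auto

lemma orbit_funpow_neq: "permutation s \<Longrightarrow> 0 < k \<Longrightarrow> k < card (orbit s x) \<Longrightarrow> (s ^^ k) x \<noteq> x"
  using orbit_card funpow_dist1_least by metis

lemma orbit_step_in: "y \<in> orbit s x \<Longrightarrow> s y \<in> orbit s x"
  by (rule orbit.step)

context ew begin

abbreviation Q :: "(nat \<Rightarrow> nat) \<Rightarrow> (nat \<Rightarrow> 'a) \<Rightarrow> nat \<Rightarrow> 'a" where
  "Q s g i \<equiv> cyc_prod G g s i (card (orbit s i))"

lemma cyc_carrier:
  assumes "\<And>k. k < m \<Longrightarrow> g ((s ^^ k) i) \<in> carrier G"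
  shows "cyc_prod G g s i m \<in> carrier G"
  using assms by (induction m) auto

lemma cyc_cong:
  assumes "\<And>k. k < m \<Longrightarrow> (s ^^ k) i = (s' ^^ k) i"
    and "\<And>k. k < m \<Longrightarrow> g ((s ^^ k) i) = g' ((s ^^ k) i)"
  shows "cyc_prod G g s i m = cyc_prod G g' s' i m"
  using assms by (induction m) auto

lemma cyc_shift:
  assumes c: "\<And>j. g ((s ^^ j) i) \<in> carrier G"
  shows "cyc_prod G g s (s i) k \<otimes> g i = g ((s ^^ k) i) \<otimes> cyc_prod G g s i k"
proof (induction k)
  case 0
  have "g i \<in> carrier G" using c[of 0] by simp
  thus ?case by simp
next
  case (Suc k)
  have e': "(s ^^ j) (s i) = (s ^^ Suc j) i" for j by (simp add: funpow_Suc_right del: funpow.simps)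
  have e: "(s ^^ k) (s i) = (s ^^ Suc k) i" by (rule e')
  have c1: "cyc_prod G g s (s i) k \<in> carrier G"
    by (rule cyc_carrier) (metis c e')
  have c2: "cyc_prod G g s i k \<in> carrier G" by (rule cyc_carrier) (rule c)
  have gi: "g i \<in> carrier G" using c[of 0] by simp
  have "cyc_prod G g s (s i) (Suc k) \<otimes> g i = g ((s ^^ Suc k) i) \<otimes> (cyc_prod G g s (s i) k \<otimes> g i)"
    using e c1 gi c[of "Suc k"] by (simp add: m_assoc)
  also have "\<dots> = g ((s ^^ Suc k) i) \<otimes> (g ((s ^^ k) i) \<otimes> cyc_prod G g s i k)" using Suc by simp
  also have "\<dots> = g ((s ^^ Suc k) i) \<otimes> cyc_prod G g s i (Suc k)" by simp
  finally show ?case .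
qed

lemma z_rot:
  assumes c: "\<And>j. g ((s ^^ j) i) \<in> carrier G" and r: "(s ^^ r) i = i"
  shows "z (cyc_prod G g s (s i) r) = z (cyc_prod G g s i r)"
proof -
  define A where "A = cyc_prod G g s (s i) r"
  define B where "B = cyc_prod G g s i r"
  have e: "(s ^^ j) (s i) = (s ^^ Suc j) i" for j by (simp add: funpow_Suc_right del: funpow.simps)
  have Ac: "A \<in> carrier G" unfolding A_def by (rule cyc_carrier) (metis c e)
  have Bc: "B \<in> carrier G" unfolding B_def by (rule cyc_carrier) (rule c)
  have gi: "g i \<in> carrier G" using c[of 0] by simp
  have "A \<otimes> g i = g i \<otimes> B" using cyc_shift[of g s i r, OF c] r unfolding A_def B_def by simp
  hence "A = g i \<otimes> B \<otimes> inv (g i)"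
    using Ac Bc gi by (metis inv_closed m_assoc m_closed r_inv r_one)
  hence "z A = z B" using zcen Bc gi unfolding central_fun_def by simp
  thus ?thesis unfolding A_def B_def .
qed

lemma z_orbit:
  assumes ps: "permutation s" and c: "\<And>x. x \<in> orbit s i \<Longrightarrow> g x \<in> carrier G"
    and y: "y \<in> orbit s i"
  shows "z (Q s g y) = z (Q s g i)"
proof -
  have "z (Q s g ((s ^^ k) i)) = z (Q s g i)" for k
  proof (induction k)
    case 0
    then show ?case by simp
  next
    case (Suc k)
    define x where "x = (s ^^ k) i"
    have xo: "x \<in> orbit s i" unfolding x_def by (rule funpow_orbit[OF ps])
    have cx: "g ((s ^^ j) x) \<in> carrier G" for j
      using c funpow_in_orbit[OF xo] by blast
    have oe: "orbit s (s x) = orbit s x" by (rule permutation_orbit_step[OF ps])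
    have "z (Q s g (s x)) = z (cyc_prod G g s (s x) (card (orbit s x)))" by (simp add: oe)
    also have "\<dots> = z (Q s g x)" by (rule z_rot[of g s x, OF cx orbit_funpow_card[OF ps]])
    finally have "z (Q s g (s x)) = z (Q s g x)" .
    moreover have "(s ^^ Suc k) i = s x" by (simp add: x_def)
    ultimately show ?case using Suc x_def by simp
  qed
  moreover obtain k where "y = (s ^^ k) i" using y orbit_altdef_permutation[OF ps] by blast
  ultimately show ?thesis by simp
qed

lemma val_eq:
  assumes s: "s permutes {..<m}" and c: "\<And>x. x < m \<Longrightarrow> g x \<in> carrier G"
    and i: "i < m" and C: "C = orbit s i"
  shows "phi (cyc_prod G g s (SOME j. j \<in> C) (card C)) = phi (Q s g i)"
proof -
  have ps: "permutation s" by (rule perm_of[OF s])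
  define a where "a = (SOME j. j \<in> C)"
  have "i \<in> C" using C orbit_self[OF ps] by simp
  hence aC: "a \<in> C" unfolding a_def by (rule someI)
  have oa: "orbit s a = C" using orbit_eq[OF ps] aC C by simp
  have c': "\<And>x. x \<in> orbit s i \<Longrightarrow> g x \<in> carrier G" using c orbit_sub[OF s i] by blast
  have ai: "a \<in> orbit s i" using aC C by simp
  have "z (Q s g a) = z (Q s g i)" 
    by (rule z_orbit[of s i g a]) (use ps c' ai in auto)
  hence "phi (Q s g a) = phi (Q s g i)" by (simp add: phi_def)
  thus ?thesis using oa by (simp add: a_def)
qed

end

context ew begin

lemma W_local:
  assumes s: "s permutes {..<n}" and e: "\<And>j. j < n \<Longrightarrow> g j = g' j"
  shows "W n s g = W n s g'"
  unfolding W_def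
proof (rule prod.cong[OF refl])
  fix C assume "C \<in> perm_cycles n s"
  then obtain i0 where i0: "i0 < n" "C = orbit s i0" unfolding perm_cycles_def by auto
  define a where "a = (SOME i. i \<in> C)"
  have "i0 \<in> C" using i0 orbit_self[OF perm_of[OF s]] by auto
  hence aC: "a \<in> C" unfolding a_def by (rule someI)
  hence an: "a < n" using orbit_sub[OF s i0(1)] i0 by auto
  have ak: "(s ^^ k) a < n" for k
  proof -
    have "(s ^^ k) a \<in> orbit s a" by (rule funpow_orbit[OF perm_of[OF s]])
    thus ?thesis using orbit_sub[OF s an] by auto
  qed
  have "cyc_prod G g s a (card C) = cyc_prod G g' s a (card C)"
    by (rule cyc_cong) (use e ak in auto)
  thus "phi (cyc_prod G g s (SOME i. i \<in> C) (card C)) = phi (cyc_prod G g' s (SOME i. i \<in> C) (card C))"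
    unfolding a_def by simp
qed

lemma W_case_a:
  assumes s: "s permutes {..<n}" and c: "\<And>j. j \<le> n \<Longrightarrow> g j \<in> carrier G"
  shows "W (Suc n) s g = W n s g * phi (g n)"
proof -
  have sn: "s n = n" using permutes_not_in[OF s] by simp
  have on: "orbit s n = {n}" using sn orbit_eq_singleton_iff by metis
  have pc: "perm_cycles (Suc n) s = insert {n} (perm_cycles n s)"
    unfolding perm_cycles_def using on by (simp add: lessThan_Suc)
  have nn: "{n} \<notin> perm_cycles n s"
  proof
    assume "{n} \<in> perm_cycles n s"
    then obtain i where i: "i < n" "{n} = orbit s i" unfolding perm_cycles_def by auto
    thus False using orbit_sub[OF s i(1)] by auto
  qed
  have fin: "finite (perm_cycles n s)" unfolding perm_cycles_def by simp
  have "W (Suc n) s g = phi (cyc_prod G g s (SOME i. i \<in> {n}) (card {n})) * W n s g"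
    unfolding W_def pc using fin nn by simp
  also have "cyc_prod G g s (SOME i. i \<in> {n}) (card {n}) = g n" using c[of n] by simp
  finally show ?thesis by simp
qed

lemma W_case_b:
  assumes s': "s' permutes {..<n}" and p: "p < n" and c: "\<And>j. j \<le> n \<Longrightarrow> g j \<in> carrier G"
  shows "W (Suc n) (Transposition.transpose p n \<circ> s') g = W n s' (g(p := g p \<otimes> g n))"
proof -
  define t where "t = Transposition.transpose p n"
  define s where "s = t \<circ> s'"
  define g' where "g' = g(p := g p \<otimes> g n)"
  define O' where "O' = orbit s' p"
  define r where "r = card O'"
  have ps': "permutation s'" by (rule perm_of[OF s'])
  have sP: "s permutes {..<Suc n}"
    unfolding s_def t_def by (rule permutes_compose[OF permutes_subset[OF s'] permutes_swap_id]) (use p in auto)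
  have ps: "permutation s" by (rule perm_of[OF sP])
  have pn: "p \<noteq> n" using p by simp
  have s'n: "s' n = n" using permutes_not_in[OF s'] by simp
  have O'sub: "O' \<subseteq> {..<n}" unfolding O'_def by (rule orbit_sub[OF s' p])
  have nO': "n \<notin> O'" using O'sub by auto
  have pO': "p \<in> O'" unfolding O'_def by (rule orbit_self[OF ps'])
  have finO': "finite O'" using O'sub finite_subset by blast
  have rpos: "0 < r" unfolding r_def O'_def by (rule orbit_card_pos[OF ps'])
  have rret: "(s' ^^ r) p = p" unfolding r_def O'_def by (rule orbit_funpow_card[OF ps'])
  have rneq: "\<And>k. 0 < k \<Longrightarrow> k < r \<Longrightarrow> (s' ^^ k) p \<noteq> p"
    unfolding r_def O'_def by (rule orbit_funpow_neq[OF ps'])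
  have inO: "\<And>k. (s' ^^ k) p \<in> O'" unfolding O'_def by (rule funpow_orbit[OF ps'])
  have s_apply: "\<And>x. s x = t (s' x)" unfolding s_def by simp
  have tfix: "\<And>y. y \<noteq> p \<Longrightarrow> y \<noteq> n \<Longrightarrow> t y = y" unfolding t_def by simp
  have it: "(s ^^ Suc k) n = (s' ^^ k) p" if "k < r" for k
    using that
  proof (induction k)
    case 0 show ?case using s'n by (simp add: s_def t_def)
  next
    case (Suc k)
    hence IH: "(s ^^ Suc k) n = (s' ^^ k) p" by simp
    have ne1: "(s' ^^ Suc k) p \<noteq> p" using rneq[of "Suc k"] Suc.prems by simp
    have ne2: "(s' ^^ Suc k) p \<noteq> n" using inO[of "Suc k"] nO' by auto
    have "(s ^^ Suc (Suc k)) n = s ((s' ^^ k) p)" using IH by simp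
    also have "\<dots> = t ((s' ^^ Suc k) p)" by (simp add: s_apply)
    also have "\<dots> = (s' ^^ Suc k) p" using tfix ne1 ne2 by simp
    finally show ?case .
  qed
  obtain r' where r': "r = Suc r'" using rpos by (cases r) auto
  have ret: "(s ^^ Suc r) n = n"
  proof -
    have "(s ^^ Suc r) n = s ((s ^^ Suc r') n)" by (simp add: r')
    also have "\<dots> = s ((s' ^^ r') p)" using it[of r'] r' by simp
    also have "\<dots> = t ((s' ^^ r) p)" by (simp add: s_apply r')
    also have "\<dots> = n" using rret by (simp add: t_def)
    finally show ?thesis .
  qed
  have oS: "orbit s n = insert n O'"
  proof -
    have "orbit s n = {(s ^^ m) n | m. m < Suc r}" by (rule orbit_altdef_bounded[OF ret]) simp
    also have "\<dots> = insert n {(s' ^^ k) p | k. k < r}"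
    proof (intro equalityI subsetI)
      fix x assume "x \<in> {(s ^^ m) n | m. m < Suc r}"
      then obtain m where m: "m < Suc r" "x = (s ^^ m) n" by auto
      show "x \<in> insert n {(s' ^^ k) p | k. k < r}"
      proof (cases m)
        case 0 thus ?thesis using m by simp
      next
        case (Suc k) thus ?thesis using m it[of k] by auto
      qed
    next
      fix x assume "x \<in> insert n {(s' ^^ k) p | k. k < r}"
      then consider "x = n" | k where "k < r" "x = (s' ^^ k) p" by auto
      thus "x \<in> {(s ^^ m) n | m. m < Suc r}"
      proof cases
        case 1
        hence "x = (s ^^ 0) n \<and> 0 < Suc r" by simp
        thus ?thesis by blast
      next
        case (2 k)
        hence "x = (s ^^ Suc k) n \<and> Suc k < Suc r" using it[of k] by simp
        thus ?thesis by blast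
      qed
    qed
    also have "{(s' ^^ k) p | k. k < r} = O'"
      unfolding O'_def using orbit_altdef_bounded[OF rret rpos] O'_def by simp
    finally show ?thesis .
  qed
  have cardS: "card (orbit s n) = Suc r" using oS finO' nO' r_def by simp
  have same: "s x = s' x" if i: "i < n" "i \<notin> O'" and x: "x \<in> orbit s' i" for i x
  proof -
    have sx: "s' x \<in> orbit s' i" by (rule orbit.step[OF x])
    have "s' x \<noteq> p"
    proof
      assume "s' x = p"
      hence "p \<in> orbit s' i" using sx by simp
      hence "orbit s' p = orbit s' i" by (rule orbit_eq[OF ps'])
      thus False using i orbit_self[OF ps', of i] O'_def by auto
    qed
    moreover have "s' x \<noteq> n" using sx orbit_sub[OF s' i(1)] by auto
    ultimately show "s x = s' x" using s_apply tfix by simp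
  qed
  have same_pow: "(s ^^ k) i = (s' ^^ k) i" if i: "i < n" "i \<notin> O'" for i k
  proof (induction k)
    case 0 show ?case by simp
  next
    case (Suc k)
    have "(s' ^^ k) i \<in> orbit s' i" by (rule funpow_orbit[OF ps'])
    hence "s ((s' ^^ k) i) = s' ((s' ^^ k) i)" by (rule same[OF i])
    thus ?case using Suc by simp
  qed
  have same_orb: "orbit s i = orbit s' i" if i: "i < n" "i \<notin> O'" for i
    by (rule orbit_cong[OF orbit_self[OF ps']]) (use same[OF i] in auto)
  have notp: "p \<notin> orbit s' i" if i: "i < n" "i \<notin> O'" for i
  proof
    assume "p \<in> orbit s' i"
    hence "orbit s' p = orbit s' i" by (rule orbit_eq[OF ps'])
    thus False using i orbit_self[OF ps', of i] O'_def by auto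
  qed
  define R where "R = orbit s' ` ({..<n} - O')"
  have pcS: "perm_cycles (Suc n) s = insert (insert n O') R"
  proof (intro equalityI subsetI)
    fix C assume "C \<in> perm_cycles (Suc n) s"
    then obtain j where j: "j < Suc n" "C = orbit s j" unfolding perm_cycles_def by auto
    show "C \<in> insert (insert n O') R"
    proof (cases "j \<in> insert n O'")
      case True
      hence "j \<in> orbit s n" using oS by simp
      hence "orbit s j = orbit s n" by (rule orbit_eq[OF ps])
      thus ?thesis using j oS by simp
    next
      case False
      hence "j < n" "j \<notin> O'" using j by auto
      thus ?thesis using j same_orb unfolding R_def by auto
    qed
  next
    fix C assume "C \<in> insert (insert n O') R"
    then consider "C = insert n O'" | j where "j < n" "j \<notin> O'" "C = orbit s' j"
      unfolding R_def by auto
    thus "C \<in> perm_cycles (Suc n) s"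
    proof cases
      case 1
      hence "C = orbit s n" using oS by simp
      thus ?thesis unfolding perm_cycles_def by auto
    next
      case (2 j)
      hence "C = orbit s j" using same_orb by simp
      thus ?thesis unfolding perm_cycles_def using 2 by auto
    qed
  qed
  have pcS': "perm_cycles n s' = insert O' R"
  proof (intro equalityI subsetI)
    fix C assume "C \<in> perm_cycles n s'"
    then obtain j where j: "j < n" "C = orbit s' j" unfolding perm_cycles_def by auto
    show "C \<in> insert O' R"
    proof (cases "j \<in> O'")
      case True
      hence "orbit s' j = O'" unfolding O'_def by (rule orbit_eq[OF ps'])
      thus ?thesis using j by simp
    next
      case False
      thus ?thesis using j unfolding R_def by auto
    qed
  next
    fix C assume "C \<in> insert O' R"
    thus "C \<in> perm_cycles n s'" unfolding R_def perm_cycles_def O'_def using p by auto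
  qed
  have nin1: "insert n O' \<notin> R"
  proof
    assume "insert n O' \<in> R"
    then obtain j where "j < n" "insert n O' = orbit s' j" unfolding R_def by auto
    thus False using orbit_sub[OF s', of j] by auto
  qed
  have nin2: "O' \<notin> R"
  proof
    assume "O' \<in> R"
    then obtain j where "j < n" "j \<notin> O'" "O' = orbit s' j" unfolding R_def by auto
    thus False using orbit_self[OF ps', of j] by auto
  qed
  have finR: "finite R" unfolding R_def by simp
  have cg: "\<And>x. x < Suc n \<Longrightarrow> g x \<in> carrier G" using c by simp
  have cg': "\<And>x. x < n \<Longrightarrow> g' x \<in> carrier G" using c p by (simp add: g'_def)
  have key0: "cyc_prod G g s n (Suc k) = cyc_prod G g' s' p k" if "0 < k" "k \<le> r" for k
    using that
  proof (induction k)
    case 0 thus ?case by simp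
  next
    case (Suc k)
    show ?case
    proof (cases k)
      case 0
      have "s n = p" using it[of 0] rpos by simp
      thus ?thesis using 0 c[of n] c[of p] p by (simp add: g'_def m_assoc)
    next
      case (Suc k')
      have IH: "cyc_prod G g s n (Suc k) = cyc_prod G g' s' p k"
        using Suc.IH Suc.prems \<open>k = Suc k'\<close> by simp
      have kr: "k < r" using Suc.prems by simp
      have e: "(s ^^ Suc k) n = (s' ^^ k) p" by (rule it[OF kr])
      have ne: "(s' ^^ k) p \<noteq> p" using rneq[of k] kr \<open>k = Suc k'\<close> by simp
      have ge: "g ((s ^^ Suc k) n) = g' ((s' ^^ k) p)" using ne by (subst e) (simp add: g'_def)
      have "cyc_prod G g s n (Suc (Suc k)) = g ((s ^^ Suc k) n) \<otimes> cyc_prod G g s n (Suc k)"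
        by (simp only: cyc_prod.simps)
      also have "\<dots> = g' ((s' ^^ k) p) \<otimes> cyc_prod G g' s' p k" by (simp only: ge IH)
      also have "\<dots> = cyc_prod G g' s' p (Suc k)" by (simp only: cyc_prod.simps)
      finally show ?thesis .
    qed
  qed
  have key: "Q s g n = Q s' g' p"
    using key0[OF rpos le_refl] cardS r_def O'_def by simp
  have v1: "phi (cyc_prod G g s (SOME j. j \<in> insert n O') (card (insert n O'))) = phi (Q s g n)"
    by (rule val_eq[OF sP cg]) (use oS in auto)
  have v2: "phi (cyc_prod G g' s' (SOME j. j \<in> O') (card O')) = phi (Q s' g' p)"
    by (rule val_eq[of s' n g' p O']) (use s' cg' p O'_def in auto)
  have vrest: "phi (cyc_prod G g s (SOME j. j \<in> C) (card C)) = phi (cyc_prod G g' s' (SOME j. j \<in> C) (card C))"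
    if C: "C \<in> R" for C
  proof -
    obtain j where j: "j < n" "j \<notin> O'" "C = orbit s' j" using C unfolding R_def by auto
    have "phi (cyc_prod G g s (SOME j. j \<in> C) (card C)) = phi (Q s g j)"
      by (rule val_eq[OF sP cg]) (use j same_orb in auto)
    also have "Q s g j = Q s' g' j"
    proof -
      have "cyc_prod G g s j (card (orbit s' j)) = cyc_prod G g' s' j (card (orbit s' j))"
      proof (rule cyc_cong)
        fix k show "(s ^^ k) j = (s' ^^ k) j" by (rule same_pow[OF j(1,2)])
        have "(s' ^^ k) j \<in> orbit s' j" by (rule funpow_orbit[OF ps'])
        hence "(s' ^^ k) j \<noteq> p" using notp[OF j(1,2)] by auto
        thus "g ((s ^^ k) j) = g' ((s ^^ k) j)" using same_pow[OF j(1,2)] by (simp add: g'_def)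
      qed
      thus ?thesis using same_orb[OF j(1,2)] by simp
    qed
    also have "phi (Q s' g' j) = phi (cyc_prod G g' s' (SOME j. j \<in> C) (card C))"
      by (rule val_eq[OF s' cg', symmetric]) (use j in auto)
    finally show ?thesis .
  qed
  have "W (Suc n) s g = phi (cyc_prod G g s (SOME j. j \<in> insert n O') (card (insert n O')))
       * (\<Prod>C\<in>R. phi (cyc_prod G g s (SOME j. j \<in> C) (card C)))"
    unfolding W_def pcS using finR nin1 by simp
  also have "\<dots> = phi (cyc_prod G g' s' (SOME j. j \<in> O') (card O'))
       * (\<Prod>C\<in>R. phi (cyc_prod G g' s' (SOME j. j \<in> C) (card C)))"
    using v1 v2 key vrest by simp
  also have "\<dots> = W n s' g'"
    unfolding W_def pcS' using finR nin2 by simp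
  finally show ?thesis unfolding s_def t_def g'_def .
qed

end

lemma bij_perm:
  "bij_betw (\<lambda>(s', p). Transposition.transpose p n \<circ> s') ({s. s permutes {..<n}} \<times> {..n})
     {s. s permutes {..<Suc n}}"
proof (rule bij_betw_imageI)
  show "inj_on (\<lambda>(s', p). Transposition.transpose p n \<circ> s') ({s. s permutes {..<n}} \<times> {..n})"
  proof (rule inj_onI)
    fix a b assume a: "a \<in> {s. s permutes {..<n}} \<times> {..n}" and b: "b \<in> {s. s permutes {..<n}} \<times> {..n}"
      and eq: "(\<lambda>(s', p). Transposition.transpose p n \<circ> s') a = (\<lambda>(s', p). Transposition.transpose p n \<circ> s') b"
    obtain s1 p1 where a': "a = (s1, p1)" by (cases a)
    obtain s2 p2 where b': "b = (s2, p2)" by (cases b)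
    have s1: "s1 permutes {..<n}" using a a' by simp
    have s2: "s2 permutes {..<n}" using b b' by simp
    have eq': "Transposition.transpose p1 n \<circ> s1 = Transposition.transpose p2 n \<circ> s2" using eq a' b' by simp
    have "(Transposition.transpose p1 n \<circ> s1) n = p1" using permutes_not_in[OF s1, of n] by simp
    moreover have "(Transposition.transpose p2 n \<circ> s2) n = p2" using permutes_not_in[OF s2, of n] by simp
    ultimately have pp: "p1 = p2" using eq' by metis
    have "s1 = s2"
    proof (rule ext)
      fix x
      have "Transposition.transpose p1 n (s1 x) = Transposition.transpose p1 n (s2 x)"
        using fun_cong[OF eq', of x] pp by simp
      thus "s1 x = s2 x" by (rule transpose_eq_imp_eq)
    qed
    thus "a = b" using a' b' pp by simp
  qed
next
  show "(\<lambda>(s', p). Transposition.transpose p n \<circ> s') ` ({s. s permutes {..<n}} \<times> {..n}) =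
     {s. s permutes {..<Suc n}}"
  proof (intro equalityI subsetI)
    fix s assume "s \<in> (\<lambda>(s', p). Transposition.transpose p n \<circ> s') ` ({s. s permutes {..<n}} \<times> {..n})"
    then obtain s' p where s': "s' permutes {..<n}" "p \<le> n" "s = Transposition.transpose p n \<circ> s'" by auto
    have "Transposition.transpose p n \<circ> s' permutes {..<Suc n}"
      by (rule permutes_compose[OF permutes_subset[OF s'(1)] permutes_swap_id]) (use s'(2) in auto)
    thus "s \<in> {s. s permutes {..<Suc n}}" using s'(3) by simp
  next
    fix s assume "s \<in> {s. s permutes {..<Suc n}}"
    hence s: "s permutes insert n {..<n}" by (simp add: lessThan_Suc)
    define p where "p = s n"
    have "p \<in> insert n {..<n}" unfolding p_def using permutes_in_image[OF s, of n] by simp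
    hence pn: "p \<le> n" by auto
    have s'P: "Transposition.transpose n p \<circ> s permutes {..<n}" using permutes_insert_lemma[OF s] p_def by simp
    have "s = Transposition.transpose p n \<circ> (Transposition.transpose n p \<circ> s)"
      by (rule ext) (simp add: transpose_commute)
    thus "s \<in> (\<lambda>(s', p). Transposition.transpose p n \<circ> s') ` ({s. s permutes {..<n}} \<times> {..n})"
      using s'P pn by (intro image_eqI[of _ _ "(Transposition.transpose n p \<circ> s, p)"]) auto
  qed
qed

context ew begin

lemma space_PP_carrier: "x \<in> space (PP I) \<Longrightarrow> j \<in> I \<Longrightarrow> x j \<in> carrier G"
  by (auto simp: space_PiM space_mu PiE_def Pi_def)

lemma proj_cont: "j \<in> I \<Longrightarrow> continuous_map (PT I) T (\<lambda>x. x j)"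
  by (rule continuous_map_product_projection)

lemma W_cont_id:
  assumes s: "s permutes {..<n}" and I: "{..<n} \<subseteq> I"
  shows "continuous_map (PT I) euclideanreal (W n s)"
proof -
  have "continuous_map (PT I) euclideanreal (\<lambda>x. W n s x)"
    by (rule W_cont[OF s]) (rule proj_cont, use I in auto)
  thus ?thesis by simp
qed

lemma drop_last:
  assumes s: "s permutes {..<n}"
  shows "integral\<^sup>L (PP {..<Suc n}) (W n s) = integral\<^sup>L (PP {..<n}) (W n s)"
proof -
  interpret prob_space \<mu> by (rule prob)
  have ins: "{..<Suc n} = insert n {..<n}" by auto
  have "integral\<^sup>L (PP {..<Suc n}) (W n s) = (\<integral>x. (\<integral>y. W n s (x(n := y)) \<partial>\<mu>) \<partial>PP {..<n})"
    unfolding ins by (rule PP_insert) (use W_cont_id[OF s] in auto)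
  also have "\<dots> = (\<integral>x. W n s x \<partial>PP {..<n})"
  proof (rule Bochner_Integration.integral_cong[OF refl])
    fix x assume x: "x \<in> space (PP {..<n})"
    have "\<And>y. W n s (x(n := y)) = W n s x" by (rule W_local[OF s]) auto
    thus "(\<integral>y. W n s (x(n := y)) \<partial>\<mu>) = W n s x" by (simp add: prob_space)
  qed
  finally show ?thesis by simp
qed

lemma int_case_a:
  assumes s: "s permutes {..<n}"
  shows "integral\<^sup>L (PP {..<Suc n}) (W (Suc n) s) = II * integral\<^sup>L (PP {..<n}) (W n s)"
proof -
  interpret prob_space \<mu> by (rule prob)
  have ins: "{..<Suc n} = insert n {..<n}" by auto
  have "integral\<^sup>L (PP {..<Suc n}) (W (Suc n) s) = integral\<^sup>L (PP {..<Suc n}) (\<lambda>g. W n s g * phi (g n))"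
  proof (rule Bochner_Integration.integral_cong[OF refl])
    fix x assume x: "x \<in> space (PP {..<Suc n})"
    show "W (Suc n) s x = W n s x * phi (x n)"
      by (rule W_case_a[OF s]) (use x space_PP_carrier in auto)
  qed
  also have "\<dots> = (\<integral>x. (\<integral>y. W n s (x(n := y)) * phi ((x(n := y)) n) \<partial>\<mu>) \<partial>PP {..<n})"
    unfolding ins
  proof (rule PP_insert)
    have "continuous_map (PT (insert n {..<n})) euclideanreal (W n s)"
      by (rule W_cont_id[OF s]) auto
    moreover have "continuous_map (PT (insert n {..<n})) euclideanreal (\<lambda>g. phi (g n))"
      using continuous_map_compose[OF proj_cont[of n "insert n {..<n}"] phi_cont] by (simp add: o_def)
    ultimately show "continuous_map (PT (insert n {..<n})) euclideanreal (\<lambda>g. W n s g * phi (g n))"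
      by (rule continuous_map_real_mult)
  qed auto
  also have "\<dots> = (\<integral>x. II * W n s x \<partial>PP {..<n})"
  proof (rule Bochner_Integration.integral_cong[OF refl])
    fix x assume x: "x \<in> space (PP {..<n})"
    have "\<And>y. W n s (x(n := y)) = W n s x" by (rule W_local[OF s]) auto
    hence "(\<integral>y. W n s (x(n := y)) * phi ((x(n := y)) n) \<partial>\<mu>) = (\<integral>y. W n s x * phi y \<partial>\<mu>)" by simp
    also have "\<dots> = II * W n s x" unfolding II_def by simp
    finally show "(\<integral>y. W n s (x(n := y)) * phi ((x(n := y)) n) \<partial>\<mu>) = II * W n s x" .
  qed
  also have "\<dots> = II * integral\<^sup>L (PP {..<n}) (W n s)" by simp
  finally show ?thesis .
qed

lemma int_case_b:
  assumes s': "s' permutes {..<n}" and p: "p < n"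
  shows "integral\<^sup>L (PP {..<Suc n}) (W (Suc n) (Transposition.transpose p n \<circ> s')) = integral\<^sup>L (PP {..<n}) (W n s')"
proof -
  define I where "I = {..<Suc n} - {p}"
  have insI: "insert p I = {..<Suc n}" using p by (auto simp: I_def)
  have pI: "p \<notin> I" "finite I" "n \<in> I" using p by (auto simp: I_def)
  define F where "F = (\<lambda>g. W n s' (g(p := g p \<otimes> g n)))"
  have Fc: "continuous_map (PT {..<Suc n}) euclideanreal F"
    unfolding F_def
  proof (rule W_cont[OF s'])
    fix j assume j: "j < n"
    show "continuous_map (PT {..<Suc n}) T (\<lambda>x. (x(p := x p \<otimes> x n)) j)"
    proof (cases "j = p")
      case True
      have "continuous_map (PT {..<Suc n}) T (\<lambda>x. x p \<otimes> x n)"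
        by (rule cont_mult) (rule proj_cont, use p in simp)+
      thus ?thesis using True by simp
    next
      case False
      have "continuous_map (PT {..<Suc n}) T (\<lambda>x. x j)" by (rule proj_cont) (use j in simp)
      thus ?thesis using False by simp
    qed
  qed
  have Wc: "continuous_map (PT {..<Suc n}) euclideanreal (W n s')" by (rule W_cont_id[OF s']) auto
  have "integral\<^sup>L (PP {..<Suc n}) (W (Suc n) (Transposition.transpose p n \<circ> s')) = integral\<^sup>L (PP {..<Suc n}) F"
  proof (rule Bochner_Integration.integral_cong[OF refl])
    fix x assume x: "x \<in> space (PP {..<Suc n})"
    show "W (Suc n) (Transposition.transpose p n \<circ> s') x = F x"
      unfolding F_def by (rule W_case_b[OF s' p]) (use x space_PP_carrier in auto)
  qed
  also have "\<dots> = (\<integral>x. (\<integral>y. F (x(p := y)) \<partial>\<mu>) \<partial>PP I)"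
    using PP_insert[OF pI(2) pI(1), of F] Fc insI by simp
  also have "\<dots> = (\<integral>x. (\<integral>y. W n s' (x(p := y)) \<partial>\<mu>) \<partial>PP I)"
  proof (rule Bochner_Integration.integral_cong[OF refl])
    fix x assume x: "x \<in> space (PP I)"
    have xn: "x n \<in> carrier G" using x pI(3) space_PP_carrier by blast
    have "\<And>y. F (x(p := y)) = W n s' (x(p := y \<otimes> x n))" unfolding F_def using pI by auto
    hence "(\<integral>y. F (x(p := y)) \<partial>\<mu>) = (\<integral>y. W n s' (x(p := y \<otimes> x n)) \<partial>\<mu>)" by simp
    also have "\<dots> = (\<integral>y. W n s' (x(p := y)) \<partial>\<mu>)"
    proof (rule int_right[OF xn, of "\<lambda>y. W n s' (x(p := y))"])
      have "W n s' \<in> borel_measurable (PP (insert p I))" using PP_cont_meas Wc insI by simp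
      thus "(\<lambda>y. W n s' (x(p := y))) \<in> borel_measurable \<mu>" by (rule inner_meas[OF x pI(1)])
    qed
    finally show "(\<integral>y. F (x(p := y)) \<partial>\<mu>) = (\<integral>y. W n s' (x(p := y)) \<partial>\<mu>)" .
  qed
  also have "\<dots> = integral\<^sup>L (PP {..<Suc n}) (W n s')"
    using PP_insert[OF pI(2) pI(1), of "W n s'"] Wc insI by simp
  also have "\<dots> = integral\<^sup>L (PP {..<n}) (W n s')" by (rule drop_last[OF s'])
  finally show ?thesis .
qed

definition SS :: "nat \<Rightarrow> real" where
  "SS n = (\<Sum>s\<in>{s. s permutes {..<n}}. integral\<^sup>L (PP {..<n}) (W n s))"

lemma SS_0: "SS 0 = 1"
proof -
  interpret prob_space "PP {}" by (rule prob_PP)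
  have "W 0 id = (\<lambda>g. 1)" unfolding W_def perm_cycles_def by (rule ext) simp
  thus ?thesis unfolding SS_def by (simp add: prob_space)
qed

lemma SS_Suc: "SS (Suc n) = (II + real n) * SS n"
proof -
  let ?f = "\<lambda>s. integral\<^sup>L (PP {..<Suc n}) (W (Suc n) s)"
  have "SS (Suc n) = (\<Sum>x\<in>{s. s permutes {..<n}} \<times> {..n}. ?f ((\<lambda>(s', p). Transposition.transpose p n \<circ> s') x))"
    unfolding SS_def by (rule sum.reindex_bij_betw[OF bij_perm, symmetric])
  also have "\<dots> = (\<Sum>(s', p)\<in>{s. s permutes {..<n}} \<times> {..n}. ?f (Transposition.transpose p n \<circ> s'))"
    by (rule sum.cong[OF refl]) (auto split: prod.splits)
  also have "\<dots> = (\<Sum>s'\<in>{s. s permutes {..<n}}. \<Sum>p\<in>{..n}. ?f (Transposition.transpose p n \<circ> s'))"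
    by (rule sum.cartesian_product[symmetric])
  also have "\<dots> = (\<Sum>s'\<in>{s. s permutes {..<n}}. (II + real n) * integral\<^sup>L (PP {..<n}) (W n s'))"
  proof (rule sum.cong[OF refl])
    fix s' assume "s' \<in> {s. s permutes {..<n}}"
    hence s': "s' permutes {..<n}" by simp
    have "(\<Sum>p\<in>{..n}. ?f (Transposition.transpose p n \<circ> s')) =
          ?f (Transposition.transpose n n \<circ> s') + (\<Sum>p\<in>{..<n}. ?f (Transposition.transpose p n \<circ> s'))"
    proof -
      have "{..n} = insert n {..<n}" by auto
      thus ?thesis by simp
    qed
    also have "\<dots> = II * integral\<^sup>L (PP {..<n}) (W n s') + (\<Sum>p\<in>{..<n}. integral\<^sup>L (PP {..<n}) (W n s'))"
      using int_case_a[OF s'] int_case_b[OF s'] by simp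
    also have "\<dots> = (II + real n) * integral\<^sup>L (PP {..<n}) (W n s')" by (simp add: algebra_simps)
    finally show "(\<Sum>p\<in>{..n}. ?f (Transposition.transpose p n \<circ> s')) = (II + real n) * integral\<^sup>L (PP {..<n}) (W n s')" .
  qed
  also have "\<dots> = (II + real n) * SS n" unfolding SS_def by (simp add: sum_distrib_left)
  finally show ?thesis .
qed

lemma SS_poch: "SS n = pochhammer II n"
  by (induction n) (simp_all add: SS_0 SS_Suc pochhammer_Suc mult.commute)

end

context ew begin

lemma cv_eq:
  assumes x: "x \<in> carrier G"
  shows "class_val z (conj_class G x) = z x"
proof -
  have "x \<in> conj_class G x" unfolding conj_class_def
  proof (rule CollectI, rule exI[of _ \<one>])
    show "x = \<one> \<otimes> x \<otimes> inv \<one> \<and> \<one> \<in> carrier G" using x by simp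
  qed
  hence "(SOME y. y \<in> conj_class G x) \<in> conj_class G x" by (rule someI)
  then obtain h where h: "h \<in> carrier G" "(SOME y. y \<in> conj_class G x) = h \<otimes> x \<otimes> inv h"
    unfolding conj_class_def by blast
  show ?thesis unfolding class_val_def h(2) using zcen h(1) x unfolding central_fun_def by blast
qed

lemma prodW:
  assumes s: "s permutes {..<n}" and c: "\<And>j. j < n \<Longrightarrow> g j \<in> carrier G"
  shows "(\<Prod>c\<in>{c \<in> conj_classes G. cycle_count G n (g, s) c \<noteq> 0}.
          class_val z c ^ cycle_count G n (g, s) c * cnj (class_val z c) ^ cycle_count G n (g, s) c)
        = complex_of_real (W n s g)"
proof -
  define cyc where "cyc = perm_cycles n s"
  define col where "col = cycle_color G g s"
  define xC where "xC C = cyc_prod G g s (SOME i. i \<in> C) (card C)" for C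
  define h where "h c = class_val z c * cnj (class_val z c)" for c
  have fin: "finite cyc" unfolding cyc_def perm_cycles_def by simp
  have xc: "xC C \<in> carrier G" if C: "C \<in> cyc" for C
  proof -
    obtain i0 where i0: "i0 < n" "C = orbit s i0" using C unfolding cyc_def perm_cycles_def by auto
    define a where "a = (SOME i. i \<in> C)"
    have "i0 \<in> C" using i0 orbit_self[OF perm_of[OF s]] by auto
    hence aC: "a \<in> C" unfolding a_def by (rule someI)
    hence an: "a < n" using orbit_sub[OF s i0(1)] i0 by auto
    have ak: "(s ^^ k) a < n" for k
    proof -
      have "(s ^^ k) a \<in> orbit s a" by (rule funpow_orbit[OF perm_of[OF s]])
      thus ?thesis using orbit_sub[OF s an] by auto
    qed
    have "cyc_prod G g s a (card C) \<in> carrier G" by (rule cyc_carrier) (use c ak in auto)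
    thus ?thesis unfolding xC_def a_def .
  qed
  have colC: "col C = conj_class G (xC C)" for C unfolding col_def xC_def cycle_color_def by simp
  have cnt: "cycle_count G n (g, s) c = card {C \<in> cyc. col C = c}" for c
    by (simp add: cycle_count_def cyc_def col_def)
  have S: "{c \<in> conj_classes G. cycle_count G n (g, s) c \<noteq> 0} = col ` cyc"
  proof (intro equalityI subsetI)
    fix c assume "c \<in> {c \<in> conj_classes G. cycle_count G n (g, s) c \<noteq> 0}"
    hence "card {C \<in> cyc. col C = c} \<noteq> 0" using cnt by simp
    hence "{C \<in> cyc. col C = c} \<noteq> {}" by (metis card.empty)
    thus "c \<in> col ` cyc" by blast
  next
    fix c assume "c \<in> col ` cyc"
    then obtain C where C: "C \<in> cyc" "c = col C" by auto
    have "c \<in> conj_classes G" unfolding conj_classes_def using C colC xc by auto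
    moreover have "finite {C \<in> cyc. col C = c}" using fin by simp
    moreover have "C \<in> {C \<in> cyc. col C = c}" using C by simp
    ultimately show "c \<in> {c \<in> conj_classes G. cycle_count G n (g, s) c \<noteq> 0}"
      using cnt by (auto simp: card_eq_0_iff)
  qed
  have "(\<Prod>c\<in>{c \<in> conj_classes G. cycle_count G n (g, s) c \<noteq> 0}.
          class_val z c ^ cycle_count G n (g, s) c * cnj (class_val z c) ^ cycle_count G n (g, s) c)
        = (\<Prod>c\<in>col ` cyc. h c ^ card {C \<in> cyc. col C = c})"
    unfolding S by (rule prod.cong[OF refl]) (simp add: cnt h_def power_mult_distrib)
  also have "\<dots> = (\<Prod>C\<in>cyc. h (col C))"
  proof -
    have "(\<Prod>C\<in>cyc. h (col C)) = (\<Prod>y\<in>col ` cyc. \<Prod>C\<in>{C. C \<in> cyc \<and> col C = y}. h (col C))"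
      by (rule prod.image_gen[OF fin])
    also have "\<dots> = (\<Prod>y\<in>col ` cyc. h y ^ card {C \<in> cyc. col C = y})"
    proof (rule prod.cong[OF refl])
      fix y assume "y \<in> col ` cyc"
      have "(\<Prod>C\<in>{C. C \<in> cyc \<and> col C = y}. h (col C)) = (\<Prod>C\<in>{C. C \<in> cyc \<and> col C = y}. h y)"
        by (rule prod.cong) auto
      thus "(\<Prod>C\<in>{C. C \<in> cyc \<and> col C = y}. h (col C)) = h y ^ card {C \<in> cyc. col C = y}" by simp
    qed
    finally show ?thesis by simp
  qed
  also have "\<dots> = (\<Prod>C\<in>cyc. complex_of_real (phi (xC C)))"
  proof (rule prod.cong[OF refl])
    fix C assume C: "C \<in> cyc"
    have "h (col C) = z (xC C) * cnj (z (xC C))" unfolding h_def colC cv_eq[OF xc[OF C]] ..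
    thus "h (col C) = complex_of_real (phi (xC C))" unfolding phi_def complex_norm_square .
  qed
  also have "\<dots> = complex_of_real (W n s g)" unfolding W_def cyc_def xC_def by simp
  finally show ?thesis .
qed

lemma main:
  "(\<integral>x. ewens_density G \<mu> z n x \<partial>(wreath_measure n \<mu>)) = 1"
proof -
  define Sn where "Sn = {s. s permutes {..<n}}"
  define U where "U = uniform_count_measure Sn"
  define M where "M = PP {..<n}"
  define cc where "cc = real (fact n) / pochhammer II n"
  define f where "f g s = cc * W n s g" for g s
  have finSn: "finite Sn" unfolding Sn_def by (rule finite_permutations) simp
  have idSn: "id \<in> Sn" unfolding Sn_def by (simp add: permutes_id)
  have cardSn: "card Sn = fact n" unfolding Sn_def by (rule card_permutations) simp_all
  have poch_pos: "0 < pochhammer II n" by (rule pochhammer_pos[OF II_pos])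
  interpret pp: pair_prob_space M U
  proof -
    have "prob_space M" unfolding M_def by (rule prob_PP)
    moreover have "prob_space U" unfolding U_def by (rule prob_space_uniform_count_measure[OF finSn]) (use idSn in auto)
    ultimately show "pair_prob_space M U"
      by (simp add: pair_prob_space_def pair_sigma_finite_def prob_space_imp_sigma_finite)
  qed
  have spU: "space U = Sn" unfolding U_def by (simp add: space_uniform_count_measure)
  have setsU: "sets U = Pow Sn" unfolding U_def by (simp add: sets_uniform_count_measure)
  have Wm: "W n s \<in> borel_measurable M" if "s \<in> Sn" for s
    unfolding M_def by (rule PP_cont_meas) (use W_cont_id that Sn_def in auto)
  have bnd: "\<exists>B. \<forall>g\<in>space M. \<bar>f g s\<bar> \<le> B" if "s \<in> Sn" for s
  proof -
    have "continuous_map (PT {..<n}) euclideanreal (f' )" if "f' = (\<lambda>g. f g s)" for f'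
      unfolding that f_def by (rule continuous_map_real_mult_left, rule W_cont_id) (use \<open>s \<in> Sn\<close> Sn_def in auto)
    from cont_bounded[OF compact_PT this[OF refl]] show ?thesis unfolding M_def space_PP by blast
  qed
  then obtain Bs where Bs: "\<And>s g. s \<in> Sn \<Longrightarrow> g \<in> space M \<Longrightarrow> \<bar>f g s\<bar> \<le> Bs s" by metis
  define B where "B = (\<Sum>s\<in>Sn. Bs s)"
  have Bs0: "s \<in> Sn \<Longrightarrow> 0 \<le> Bs s" for s
  proof -
    assume s: "s \<in> Sn"
    obtain g where "g \<in> space M" using pp.M1.not_empty by blast
    thus ?thesis using Bs[OF s] by (meson abs_ge_zero order_trans)
  qed
  have BsB: "s \<in> Sn \<Longrightarrow> Bs s \<le> B" for s unfolding B_def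
    by (rule member_le_sum) (use Bs0 finSn in auto)
  have meas: "(\<lambda>x. f (fst x) (snd x)) \<in> borel_measurable (M \<Otimes>\<^sub>M U)"
  proof -
    have eq: "f (fst x) (snd x) = (\<Sum>s\<in>Sn. f (fst x) s * indicator {s} (snd x))" if "x \<in> space (M \<Otimes>\<^sub>M U)" for x
    proof -
      have sx: "snd x \<in> Sn" using that spU by (auto simp: space_pair_measure)
      have "(\<Sum>s\<in>Sn. f (fst x) s * indicator {s} (snd x)) = (\<Sum>s\<in>{snd x}. f (fst x) s * indicator {s} (snd x))"
        by (rule sum.mono_neutral_right) (use finSn sx in auto)
      thus ?thesis by simp
    qed
    have "(\<lambda>x. \<Sum>s\<in>Sn. f (fst x) s * indicator {s} (snd x)) \<in> borel_measurable (M \<Otimes>\<^sub>M U)"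
    proof (rule borel_measurable_sum)
      fix s assume s: "s \<in> Sn"
      have m1: "(\<lambda>x. f (fst x) s) \<in> borel_measurable (M \<Otimes>\<^sub>M U)"
      proof -
        have "(\<lambda>g. f g s) \<in> borel_measurable M" unfolding f_def using Wm[OF s] by simp
        from measurable_comp[OF measurable_fst this] show ?thesis by (simp add: o_def)
      qed
      have "{s} \<in> sets U" using setsU s by simp
      hence "(indicator {s} :: _ \<Rightarrow> real) \<in> borel_measurable U" by simp
      from measurable_comp[OF measurable_snd this]
      have m2: "(\<lambda>x. indicator {s} (snd x) :: real) \<in> borel_measurable (M \<Otimes>\<^sub>M U)" by (simp add: o_def)
      show "(\<lambda>x. f (fst x) s * indicator {s} (snd x)) \<in> borel_measurable (M \<Otimes>\<^sub>M U)"
        using m1 m2 by (rule borel_measurable_times)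
    qed
    thus ?thesis using eq measurable_cong[of "M \<Otimes>\<^sub>M U"] by (smt (verit))
  qed
  have int: "integrable (M \<Otimes>\<^sub>M U) (case_prod f)"
  proof (rule pp.integrable_const_bound[where B=B])
    show "AE x in M \<Otimes>\<^sub>M U. norm (case_prod f x) \<le> B"
    proof (rule AE_I2)
      fix x assume x: "x \<in> space (M \<Otimes>\<^sub>M U)"
      hence "fst x \<in> space M" "snd x \<in> Sn" using spU by (auto simp: space_pair_measure)
      thus "norm (case_prod f x) \<le> B" using Bs BsB by (cases x) (fastforce intro: order_trans)
    qed
    show "case_prod f \<in> borel_measurable (M \<Otimes>\<^sub>M U)" using meas by (simp add: case_prod_beta')
  qed
  have "integral\<^sup>L (M \<Otimes>\<^sub>M U) (case_prod f) = (\<integral>s. (\<integral>g. f g s \<partial>M) \<partial>U)"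
    by (rule pp.integral_snd[OF int, symmetric])
  also have "\<dots> = (\<Sum>s\<in>Sn. (\<integral>g. f g s \<partial>M)) / card Sn"
    unfolding U_def by (rule integral_uniform_count_measure[OF finSn])
  also have "\<dots> = cc * SS n / card Sn"
    unfolding f_def SS_def M_def Sn_def by (simp add: sum_distrib_left)
  also have "\<dots> = 1" using poch_pos cardSn unfolding SS_poch cc_def by simp
  finally have I1: "integral\<^sup>L (M \<Otimes>\<^sub>M U) (case_prod f) = 1" .
  have II': "(\<integral>g. (cmod (z g))\<^sup>2 \<partial>\<mu>) = II" unfolding II_def phi_def ..
  have "(\<integral>x. ewens_density G \<mu> z n x \<partial>(wreath_measure n \<mu>)) =
        (\<integral>x. complex_of_real (case_prod f x) \<partial>(M \<Otimes>\<^sub>M U))"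
    unfolding wreath_measure_def M_def[symmetric] Sn_def[symmetric] U_def[symmetric]
  proof (rule Bochner_Integration.integral_cong[OF refl])
    fix x assume x: "x \<in> space (M \<Otimes>\<^sub>M U)"
    obtain g s where gs: "x = (g, s)" by (cases x)
    have g: "g \<in> space M" and s: "s \<in> Sn" using x gs spU by (auto simp: space_pair_measure)
    have cg: "\<And>j. j < n \<Longrightarrow> g j \<in> carrier G" using g space_PP_carrier unfolding M_def by auto
    have sP: "s permutes {..<n}" using s Sn_def by simp
    show "ewens_density G \<mu> z n x = complex_of_real (case_prod f x)"
      unfolding gs ewens_density_def Let_def II'
      using prodW[OF sP cg] by (simp add: f_def cc_def)
  qed
  also have "\<dots> = 1" using I1 by simp
  finally show ?thesis .
qed

end

theorem mainTheorem2:
  fixes G :: "('a, 'b) monoid_scheme" and T :: "'a topology" and \<mu> :: "'a measure"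
    and z :: "'a \<Rightarrow> complex" and n :: nat
  assumes "compact_group G T"
    and "normalized_haar G T \<mu>"
    and "continuous_map T euclidean z"
    and "\<forall>g\<in>carrier G. z g \<noteq> 0"
    and "central_fun G z"
  shows "(\<integral>x. ewens_density G \<mu> z n x \<partial>(wreath_measure n \<mu>)) = 1"
proof -
  have grp: "group G" using assms(1) unfolding compact_group_def by auto
  interpret ew G T \<mu> z
    using assms grp by (simp add: ew_def ew_axioms_def)
  show ?thesis by (rule main)
qed

end
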